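(* Consider the weighted stochastic block model: there are $r$ latent communities labelled $1,\ldots,r$; each node $i$ is independently assigned a latent community $Z_i$ with $\mathbb{P}(Z_i=z)=p_z>0$ for $z=1,\ldots,r$; each unordered pair of distinct nodes $i\neq j$ carries a real-valued edge weight $X_{i,j}=X_{j,i}$, where, conditional on the community indicators, the edge weights are independent and $X_{i,j}$ has distribution function $F_{z_1,z_2}(x)=\mathbb{P}(X_{i,j}\le x\mid Z_i=z_1,Z_j=z_2)$. Let $F_z(x):=\sum_{z'=1}^r F_{z,z'}(x)\,p_{z'}=\mathbb{P}(X_{i,j}\le x\mid Z_i=z)$. Suppose that the functions $F_1,\ldots,F_r$ are linearly independent. Then the weighted stochastic block model, i.e. the number of communities $r$, the community distribution $\boldsymbol{p}=(p_1,\ldots,p_r)'$, and the conditional distributions $F_{z_1,z_2}$, $1\le z_1,z_2\le r$, is nonparametrically identified from the distribution of the edge weights, up to relabeling of the latent communities.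
   Context: "Nonparametrically identified up to relabeling" means that any two weighted stochastic block models satisfying the assumptions and inducing the same joint distribution of observed edge weights have the same $r$ and have $(\boldsymbol{p},\{F_{z_1,z_2}\})$ equal up to a single permutation of the community labels, with no parametric restrictions imposed on the $F_{z_1,z_2}$. *)

theory Defs
  imports "HOL-Analysis.Analysis" "HOL-Library.FuncSet"
begin

definition is_cdf :: "(real \<Rightarrow> real) \<Rightarrow> bool" where
  "is_cdf F \<longleftrightarrow> mono F \<and> (\<forall>x. continuous (at_right x) F)
     \<and> (F \<longlongrightarrow> 0) at_bot \<and> (F \<longlongrightarrow> 1) at_top"

text \<open>A weighted stochastic block model with r communities labelled 1..r,
  community probabilities p z > 0 and conditional edge-weight distribution functions
  F z1 z2 (symmetric since X_ij = X_ji).\<close>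
definition wsbm :: "nat \<Rightarrow> (nat \<Rightarrow> real) \<Rightarrow> (nat \<Rightarrow> nat \<Rightarrow> real \<Rightarrow> real) \<Rightarrow> bool" where
  "wsbm r p F \<longleftrightarrow> r \<ge> 1 \<and> (\<forall>z\<in>{1..r}. p z > 0) \<and> (\<Sum>z=1..r. p z) = 1
     \<and> (\<forall>z1\<in>{1..r}. \<forall>z2\<in>{1..r}. is_cdf (F z1 z2) \<and> F z1 z2 = F z2 z1)"

definition marg_cdf :: "nat \<Rightarrow> (nat \<Rightarrow> real) \<Rightarrow> (nat \<Rightarrow> nat \<Rightarrow> real \<Rightarrow> real) \<Rightarrow> nat \<Rightarrow> real \<Rightarrow> real" where
  "marg_cdf r p F z x = (\<Sum>z'=1..r. F z z' x * p z')"

definition lin_indep_funs :: "nat \<Rightarrow> (nat \<Rightarrow> real \<Rightarrow> real) \<Rightarrow> bool" where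
  "lin_indep_funs r G \<longleftrightarrow>
     (\<forall>c :: nat \<Rightarrow> real. (\<forall>x. (\<Sum>z=1..r. c z * G z x) = 0) \<longrightarrow> (\<forall>z\<in>{1..r}. c z = 0))"

text \<open>Joint distribution function of the observed edge weights (X_ij)_{i<j<n} in a network
  of n nodes: P(X_ij \<le> x i j for all i < j < n), obtained by mixing over the i.i.d.
  community labels and using conditional independence of the edge weights.\<close>
definition edge_joint_cdf ::
  "nat \<Rightarrow> (nat \<Rightarrow> real) \<Rightarrow> (nat \<Rightarrow> nat \<Rightarrow> real \<Rightarrow> real) \<Rightarrow> nat \<Rightarrow> (nat \<Rightarrow> nat \<Rightarrow> real) \<Rightarrow> real" where
  "edge_joint_cdf r p F n x =
     (\<Sum>Z \<in> Pi\<^sub>E {..<n} (\<lambda>_. {1..r}).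
        (\<Prod>i<n. p (Z i)) * (\<Prod>(i,j) \<in> {(i,j). i < j \<and> j < n}. F (Z i) (Z j) (x i j)))"

end

theory Submission
  imports Defs
begin


lemma sum_PiE_insert:
  assumes "x \<notin> S"
  shows "(\<Sum>Z\<in>Pi\<^sub>E (insert x S) T. f Z) = (\<Sum>Z\<in>Pi\<^sub>E S T. \<Sum>y\<in>T x. f (Z(x:=y)))"
proof -
  have "(\<Sum>Z\<in>Pi\<^sub>E (insert x S) T. f Z) = (\<Sum>yg\<in>T x \<times> Pi\<^sub>E S T. f ((\<lambda>(y, g). g(x := y)) yg))"
    unfolding PiE_insert_eq by (subst sum.reindex[OF inj_combinator[OF assms]]) (simp add: o_def)
  also have "\<dots> = (\<Sum>y\<in>T x. \<Sum>g\<in>Pi\<^sub>E S T. f (g(x:=y)))"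
    by (simp add: sum.cartesian_product split_def)
  also have "\<dots> = (\<Sum>Z\<in>Pi\<^sub>E S T. \<Sum>y\<in>T x. f (Z(x:=y)))"
    by (rule sum.swap)
  finally show ?thesis .
qed

lemma sum_PiE_lessThan_Suc:
  "(\<Sum>Z\<in>Pi\<^sub>E {..<Suc n} T. f Z) = (\<Sum>Z\<in>Pi\<^sub>E {..<n} T. \<Sum>y\<in>T n. f (Z(n:=y)))"
proof -
  have "{..<Suc n} = insert n {..<n}" by auto
  then show ?thesis by (simp add: sum_PiE_insert)
qed

definition pairs :: "nat \<Rightarrow> (nat \<times> nat) set" where
  "pairs n = {(i,j). i < j \<and> j < n}"

lemma finite_pairs: "finite (pairs n)"
  by (rule finite_subset[of _ "{..<n} \<times> {..<n}"]) (auto simp: pairs_def)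

lemma prod_pairs_Suc:
  "(\<Prod>(i,j)\<in>pairs (Suc n). g i j) = (\<Prod>(i,j)\<in>pairs n. g i j) * (\<Prod>i<n. g i n)"
proof -
  have e: "pairs (Suc n) = pairs n \<union> (\<lambda>i. (i,n)) ` {..<n}"
    by (auto simp: pairs_def less_Suc_eq)
  have d: "pairs n \<inter> (\<lambda>i. (i,n)) ` {..<n} = {}" by (auto simp: pairs_def)
  show ?thesis unfolding e
    by (subst prod.union_disjoint[OF finite_pairs _ d]) (auto simp: prod.reindex inj_on_def)
qed

definition gf :: "(nat\<Rightarrow>nat\<Rightarrow>real\<Rightarrow>real) \<Rightarrow> (nat\<Rightarrow>nat) \<Rightarrow> real \<Rightarrow> (nat\<Rightarrow>real) \<Rightarrow> (nat\<Rightarrow>nat) \<Rightarrow> nat \<Rightarrow> nat \<Rightarrow> real" where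
  "gf F par x a Z i j = (if i = 0 \<and> j = 1 then F (Z i) (Z j) x
      else if 2 \<le> j \<and> i = par j then F (Z i) (Z j) (a j) else 1)"

lemma formula:
  assumes par: "\<forall>j. par j \<le> 1"
  shows "(\<Sum>Z\<in>Pi\<^sub>E {..<k+2} (\<lambda>_. {1..r}). (\<Prod>i<k+2. p (Z i)) * (\<Prod>(i,j)\<in>pairs (k+2). gf F par x a Z i j) * h (Z 0) (Z 1))
    = (\<Sum>z0\<in>{1..r}. \<Sum>z1\<in>{1..r}. p z0 * p z1 * F z0 z1 x
         * (\<Prod>j\<in>{2..<k+2}. marg_cdf r p F (if par j = 0 then z0 else z1) (a j)) * h z0 z1)"
proof (induction k arbitrary: h)
  case 0
  have e: "{..<0+2::nat} = insert 1 (insert 0 {})" by auto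
  have pe: "pairs (0+2) = {(0,1)}" by (auto simp: pairs_def)
  show ?case
    apply (simp only: e pe)
    apply (simp add: sum_PiE_insert PiE_empty_domain gf_def)
    apply (simp add: algebra_simps)
    done
next
  case (Suc k)
  define n where "n = k + 2"
  have n2: "2 \<le> n" unfolding n_def by simp
  have pn: "par n < n" using par n2 by (metis le_trans not_le one_le_numeral le_less_trans order.refl Suc_1 lessI less_le_trans)
  have eS: "Suc k + 2 = Suc n" unfolding n_def by simp
  have ins: "{..<Suc n} = insert n {..<n}" by auto
  let ?G = "marg_cdf r p F"
  let ?sel = "\<lambda>z0 z1. if par n = 0 then z0 else z1"
  define h' where "h' = (\<lambda>z0 z1. h z0 z1 * ?G (?sel z0 z1) (a n))"
  have inner: "(\<Sum>z\<in>{1..r}. (\<Prod>i<Suc n. p ((Z(n:=z)) i)) * (\<Prod>(i,j)\<in>pairs (Suc n). gf F par x a (Z(n:=z)) i j)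
          * h ((Z(n:=z)) 0) ((Z(n:=z)) 1))
      = (\<Prod>i<n. p (Z i)) * (\<Prod>(i,j)\<in>pairs n. gf F par x a Z i j) * h' (Z 0) (Z 1)" for Z
  proof -
    have z0: "(Z(n:=z)) 0 = Z 0" "(Z(n:=z)) 1 = Z 1" for z using n2 by auto
    have pp: "(\<Prod>i<Suc n. p ((Z(n:=z)) i)) = (\<Prod>i<n. p (Z i)) * p z" for z
      by (simp add: prod.lessThan_Suc)
    have pg1: "(\<Prod>(i,j)\<in>pairs n. gf F par x a (Z(n:=z)) i j) = (\<Prod>(i,j)\<in>pairs n. gf F par x a Z i j)" for z
      by (rule prod.cong) (auto simp: pairs_def gf_def)
    have pg2: "(\<Prod>i<n. gf F par x a (Z(n:=z)) i n) = F (Z (par n)) z (a n)" for z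
    proof -
      have "(\<Prod>i<n. gf F par x a (Z(n:=z)) i n) = (\<Prod>i<n. if i = par n then F (Z (par n)) z (a n) else 1)"
        by (rule prod.cong) (use n2 in \<open>auto simp: gf_def\<close>)
      also have "\<dots> = F (Z (par n)) z (a n)" using pn by (simp add: prod.delta)
      finally show ?thesis .
    qed
    have sel: "Z (par n) = ?sel (Z 0) (Z 1)" proof -
      have "par n = 0 \<or> par n = 1" using par[rule_format, of n] by linarith
      then show ?thesis by auto
    qed
    have "(\<Sum>z\<in>{1..r}. (\<Prod>i<Suc n. p ((Z(n:=z)) i)) * (\<Prod>(i,j)\<in>pairs (Suc n). gf F par x a (Z(n:=z)) i j)
          * h ((Z(n:=z)) 0) ((Z(n:=z)) 1))
        = (\<Sum>z\<in>{1..r}. ((\<Prod>i<n. p (Z i)) * (\<Prod>(i,j)\<in>pairs n. gf F par x a Z i j) * h (Z 0) (Z 1))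
             * (F (Z (par n)) z (a n) * p z))"
      using n2 by (intro sum.cong) (simp_all add: z0 pp pg1 pg2 prod_pairs_Suc[of _ n] algebra_simps)
    also have "\<dots> = ((\<Prod>i<n. p (Z i)) * (\<Prod>(i,j)\<in>pairs n. gf F par x a Z i j) * h (Z 0) (Z 1))
             * ?G (Z (par n)) (a n)"
      by (simp add: sum_distrib_left[symmetric] marg_cdf_def)
    finally show ?thesis unfolding h'_def sel by (simp add: algebra_simps)
  qed
  have "(\<Sum>Z\<in>Pi\<^sub>E {..<Suc n} (\<lambda>_. {1..r}). (\<Prod>i<Suc n. p (Z i)) * (\<Prod>(i,j)\<in>pairs (Suc n). gf F par x a Z i j) * h (Z 0) (Z 1))
     = (\<Sum>Z\<in>Pi\<^sub>E {..<n} (\<lambda>_. {1..r}). (\<Prod>i<n. p (Z i)) * (\<Prod>(i,j)\<in>pairs n. gf F par x a Z i j) * h' (Z 0) (Z 1))"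
    by (simp only: sum_PiE_lessThan_Suc inner)
  also have "\<dots> = (\<Sum>z0\<in>{1..r}. \<Sum>z1\<in>{1..r}. p z0 * p z1 * F z0 z1 x
         * (\<Prod>j\<in>{2..<n}. ?G (if par j = 0 then z0 else z1) (a j)) * h' z0 z1)"
    using Suc.IH[of h'] unfolding n_def by simp
  also have "\<dots> = (\<Sum>z0\<in>{1..r}. \<Sum>z1\<in>{1..r}. p z0 * p z1 * F z0 z1 x
         * (\<Prod>j\<in>{2..<Suc n}. ?G (if par j = 0 then z0 else z1) (a j)) * h z0 z1)"
    unfolding h'_def using n2 by (simp add: prod.atLeastLessThan_Suc algebra_simps)
  finally show ?case unfolding eS .
qed

definition xt :: "(nat\<Rightarrow>nat) \<Rightarrow> real \<Rightarrow> (nat\<Rightarrow>real) \<Rightarrow> real \<Rightarrow> nat \<Rightarrow> nat \<Rightarrow> real" where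
  "xt par x a t i j = (if i = 0 \<and> j = 1 then x else if 2 \<le> j \<and> i = par j then a j else t)"

lemma wsbm_cdf: "wsbm r p F \<Longrightarrow> z1 \<in> {1..r} \<Longrightarrow> z2 \<in> {1..r} \<Longrightarrow> is_cdf (F z1 z2)"
  unfolding wsbm_def by simp

lemma lim_edge:
  assumes "wsbm r p F"
  shows "((\<lambda>t. edge_joint_cdf r p F n (xt par x a t)) \<longlongrightarrow>
    (\<Sum>Z\<in>Pi\<^sub>E {..<n} (\<lambda>_. {1..r}). (\<Prod>i<n. p (Z i)) * (\<Prod>(i,j)\<in>pairs n. gf F par x a Z i j))) at_top"
  unfolding edge_joint_cdf_def pairs_def[symmetric]
proof (rule tendsto_sum, rule tendsto_mult, rule tendsto_const, rule tendsto_prod)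
  fix Z q assume Z: "Z \<in> Pi\<^sub>E {..<n} (\<lambda>_. {1..r})" and q: "q \<in> pairs n"
  obtain i j where qe: "q = (i,j)" and ij: "i < j" "j < n" using q by (auto simp: pairs_def)
  have zi: "Z i \<in> {1..r}" "Z j \<in> {1..r}" using Z ij by (auto simp: PiE_iff)
  have cdf: "is_cdf (F (Z i) (Z j))" using wsbm_cdf[OF assms zi] .
  have "((\<lambda>t. F (Z i) (Z j) (xt par x a t i j)) \<longlongrightarrow> gf F par x a Z i j) at_top"
  proof (cases "i = 0 \<and> j = 1")
    case True
    then have e1: "(\<lambda>t. F (Z i) (Z j) (xt par x a t i j)) = (\<lambda>t. F (Z i) (Z j) x)"
      by (simp add: xt_def)
    have e2: "gf F par x a Z i j = F (Z i) (Z j) x" using True by (simp add: gf_def)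
    show ?thesis unfolding e1 e2 by (rule tendsto_const)
  next
    case f1: False
    show ?thesis
    proof (cases "2 \<le> j \<and> i = par j")
      case True
      then have e1: "(\<lambda>t. F (Z i) (Z j) (xt par x a t i j)) = (\<lambda>t. F (Z i) (Z j) (a j))"
        using f1 by (simp add: xt_def)
      have e2: "gf F par x a Z i j = F (Z i) (Z j) (a j)" using True f1 by (simp add: gf_def)
      show ?thesis unfolding e1 e2 by (rule tendsto_const)
    next
      case False
      have l1: "(F (Z i) (Z j) \<longlongrightarrow> 1) at_top" using cdf unfolding is_cdf_def by blast
      have e1: "(\<lambda>t. F (Z i) (Z j) (xt par x a t i j)) = F (Z i) (Z j)"
        unfolding xt_def using False f1 by (intro ext) auto
      have e2: "gf F par x a Z i j = 1" unfolding gf_def using False f1 by auto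
      show ?thesis unfolding e1 e2 by (rule l1)
    qed
  qed
  then show "((\<lambda>t. case q of (i, j) \<Rightarrow> F (Z i) (Z j) (xt par x a t i j)) \<longlongrightarrow> (case q of (i, j) \<Rightarrow> gf F par x a Z i j)) at_top"
    unfolding qe prod.case .
qed
lemma edge_eq_formula:
  fixes k :: nat and par :: "nat \<Rightarrow> nat"
  assumes w1: "wsbm r p F" and w2: "wsbm r' p' F'"
    and eq: "\<forall>n x. edge_joint_cdf r p F n x = edge_joint_cdf r' p' F' n x"
    and par: "\<forall>j. par j \<le> 1"
  shows "(\<Sum>z0\<in>{1..r}. \<Sum>z1\<in>{1..r}. p z0 * p z1 * F z0 z1 x
         * (\<Prod>j\<in>{2..<k+2}. marg_cdf r p F (if par j = 0 then z0 else z1) (a j)))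
       = (\<Sum>z0\<in>{1..r'}. \<Sum>z1\<in>{1..r'}. p' z0 * p' z1 * F' z0 z1 x
         * (\<Prod>j\<in>{2..<k+2}. marg_cdf r' p' F' (if par j = 0 then z0 else z1) (a j)))"
proof -
  note l1 = lim_edge[OF w1, where n="k+2" and par=par and x=x and a=a]
  note l2 = lim_edge[OF w2, where n="k+2" and par=par and x=x and a=a]
  have "(\<Sum>Z\<in>Pi\<^sub>E {..<k+2} (\<lambda>_. {1..r}). (\<Prod>i<k+2. p (Z i)) * (\<Prod>(i,j)\<in>pairs (k+2). gf F par x a Z i j))
      = (\<Sum>Z\<in>Pi\<^sub>E {..<k+2} (\<lambda>_. {1..r'}). (\<Prod>i<k+2. p' (Z i)) * (\<Prod>(i,j)\<in>pairs (k+2). gf F' par x a Z i j))"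
    using l1 l2 unfolding eq[rule_format] by (rule tendsto_unique[OF trivial_limit_at_top_linorder])
  then show ?thesis
    using formula[OF par, where k=k and r=r and p=p and F=F and x=x and a=a and h="\<lambda>_ _. 1"] formula[OF par, where k=k and r=r' and p=p' and F=F' and x=x and a=a and h="\<lambda>_ _. 1"] by simp
qed

lemma prod_blocks:
  fixes m m2 :: nat
  shows "(\<Prod>j\<in>{2..<m+m2+2}. g (if (if j < m+2 then 0 else 1::nat) = 0 then z0 else z1)
        (if j < m+2 then A (j-2) else B (j-2-m)))
   = (\<Prod>j<m. g z0 (A j)) * (\<Prod>l<m2. g z1 (B l))"
proof -
  let ?f = "\<lambda>j. g (if (if j < m+2 then 0 else 1::nat) = 0 then z0 else z1) (if j < m+2 then A (j-2) else B (j-2-m))"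
  have "prod ?f {2..<m+m2+2} = prod ?f {2..<m+2} * prod ?f {m+2..<m+m2+2}"
    by (rule prod.atLeastLessThan_concat[symmetric]) auto
  also have "prod ?f {2..<m+2} = (\<Prod>j<m. g z0 (A j))"
  proof -
    have "prod ?f {0+2..<m+2} = (\<Prod>j\<in>{0..<m}. ?f (j+2))" by (rule prod.shift_bounds_nat_ivl)
    also have "\<dots> = (\<Prod>j<m. g z0 (A j))" by (simp add: atLeast0LessThan)
    finally show ?thesis by (simp only: add_0_left)
  qed
  also have "prod ?f {m+2..<m+m2+2} = (\<Prod>l<m2. g z1 (B l))"
  proof -
    have "prod ?f {0+(m+2)..<m2+(m+2)} = (\<Prod>j\<in>{0..<m2}. ?f (j+(m+2)))" by (rule prod.shift_bounds_nat_ivl)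
    also have "\<dots> = (\<Prod>l<m2. g z1 (B l))" by (simp add: atLeast0LessThan)
    moreover have "m2+(m+2) = m+m2+2" by simp
    ultimately show ?thesis by (simp only: add_0_left)
  qed
  finally show ?thesis .
qed

definition B2 :: "nat \<Rightarrow> (nat \<Rightarrow> real) \<Rightarrow> (nat \<Rightarrow> nat \<Rightarrow> real \<Rightarrow> real) \<Rightarrow> real \<Rightarrow> nat \<Rightarrow> (nat \<Rightarrow> real) \<Rightarrow> nat \<Rightarrow> (nat \<Rightarrow> real) \<Rightarrow> real" where
  "B2 r p F x m A m2 B = (\<Sum>q\<in>{1..r}\<times>{1..r}. p (fst q) * p (snd q) * F (fst q) (snd q) x
      * (\<Prod>j<m. marg_cdf r p F (fst q) (A j)) * (\<Prod>l<m2. marg_cdf r p F (snd q) (B l)))"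

lemma B2_eq:
  assumes w1: "wsbm r p F" and w2: "wsbm r' p' F'"
    and eq: "\<forall>n x. edge_joint_cdf r p F n x = edge_joint_cdf r' p' F' n x"
  shows "B2 r p F x m A m2 B = B2 r' p' F' x m A m2 B"
proof -
  define par where "par = (\<lambda>j::nat. if j < m+2 then 0 else 1::nat)"
  define a where "a = (\<lambda>j. if j < m+2 then A (j-2) else B (j-2-m))"
  have par1: "\<forall>j. par j \<le> 1" unfolding par_def by simp
  have key: "(\<Sum>z0\<in>{1..s}. \<Sum>z1\<in>{1..s}. q z0 * q z1 * H z0 z1 x
         * (\<Prod>j\<in>{2..<(m+m2)+2}. marg_cdf s q H (if par j = 0 then z0 else z1) (a j)))
       = B2 s q H x m A m2 B" for s q H
    unfolding B2_def par_def a_def prod_blocks[where g="marg_cdf s q H"]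
    by (simp add: sum.cartesian_product split_def algebra_simps add.assoc)
  show ?thesis
    using edge_eq_formula[OF w1 w2 eq par1, where x=x and k="m+m2" and a=a] unfolding key .
qed

lemma poly_ext_gen:
  fixes w :: "'i \<Rightarrow> real" and u :: "'i \<Rightarrow> real \<Rightarrow> real"
    and w' :: "'j \<Rightarrow> real" and u' :: "'j \<Rightarrow> real \<Rightarrow> real"
    and bb cc :: "'k \<Rightarrow> real"
  assumes H: "\<forall>(m::nat) b. (\<Sum>i\<in>I. w i * (\<Prod>j<m. u i (b j))) = (\<Sum>i\<in>I'. w' i * (\<Prod>j<m. u' i (b j)))"
    and K: "finite K"
  shows "\<forall>(m::nat) b. (\<Sum>i\<in>I. w i * ((\<Prod>j<m. u i (b j)) * (\<Prod>k\<in>K. u i (bb k) - cc k)))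
           = (\<Sum>i\<in>I'. w' i * ((\<Prod>j<m. u' i (b j)) * (\<Prod>k\<in>K. u' i (bb k) - cc k)))"
  using K
proof (induction K rule: finite_induct)
  case empty
  then show ?case using H by simp
next
  case (insert k K)
  show ?case
  proof (intro allI)
    fix m :: nat and b :: "nat \<Rightarrow> real"
    let ?b = "b(m := bb k)"
    have pu: "(\<Prod>j<Suc m. v (?b j)) = (\<Prod>j<m. v (b j)) * v (bb k)" for v :: "real \<Rightarrow> real"
      by (simp add: prod.lessThan_Suc)
    have pu2: "(\<Prod>j<m. v (?b j)) = (\<Prod>j<m. v (b j))" for v :: "real \<Rightarrow> real"
      by (rule prod.cong) auto
    have split: "W * ((\<Prod>j<m. v (b j)) * (\<Prod>k'\<in>insert k K. v (bb k') - cc k'))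
        = W * ((\<Prod>j<Suc m. v (?b j)) * (\<Prod>k'\<in>K. v (bb k') - cc k'))
          - cc k * (W * ((\<Prod>j<m. v (?b j)) * (\<Prod>k'\<in>K. v (bb k') - cc k')))"
      for W and v :: "real \<Rightarrow> real"
      using insert.hyps by (simp add: pu pu2 algebra_simps)
    show "(\<Sum>i\<in>I. w i * ((\<Prod>j<m. u i (b j)) * (\<Prod>k\<in>insert k K. u i (bb k) - cc k)))
           = (\<Sum>i\<in>I'. w' i * ((\<Prod>j<m. u' i (b j)) * (\<Prod>k\<in>insert k K. u' i (bb k) - cc k)))"
      unfolding split
      by (simp only: sum_subtractf sum_distrib_left[symmetric] insert.IH[rule_format])
  qed
qed

lemma poly_ext:
  fixes w :: "'i \<Rightarrow> real" and u :: "'i \<Rightarrow> real \<Rightarrow> real"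
    and w' :: "'j \<Rightarrow> real" and u' :: "'j \<Rightarrow> real \<Rightarrow> real"
    and bb cc :: "'k \<Rightarrow> real"
  assumes H: "\<forall>(m::nat) b. (\<Sum>i\<in>I. w i * (\<Prod>j<m. u i (b j))) = (\<Sum>i\<in>I'. w' i * (\<Prod>j<m. u' i (b j)))"
    and K: "finite K"
  shows "(\<Sum>i\<in>I. w i * (\<Prod>k\<in>K. u i (bb k) - cc k))
           = (\<Sum>i\<in>I'. w' i * (\<Prod>k\<in>K. u' i (bb k) - cc k))"
  using poly_ext_gen[OF H K, where bb=bb and cc=cc, rule_format, where m=0 and b="\<lambda>_. 0"] by simp

lemma phi_exists:
  fixes S :: "(real \<Rightarrow> real) set"
  assumes "finite S"
  shows "\<exists>bb cc. (\<Prod>k\<in>S-{f0}. f0 (bb k) - cc k) \<noteq> 0 \<and> (\<forall>f\<in>S-{f0}. (\<Prod>k\<in>S-{f0}. f (bb k) - cc k) = 0)"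
proof -
  define bb where "bb = (\<lambda>f. SOME t. f t \<noteq> f0 t)"
  define cc where "cc = (\<lambda>f::real\<Rightarrow>real. f (bb f))"
  have bbp: "f0 (bb f) \<noteq> f (bb f)" if "f \<noteq> f0" for f
  proof -
    obtain t where "f t \<noteq> f0 t" using \<open>f \<noteq> f0\<close> by (auto simp: fun_eq_iff)
    then have "f (bb f) \<noteq> f0 (bb f)" unfolding bb_def by (rule someI)
    then show ?thesis by simp
  qed
  have "(\<Prod>k\<in>S-{f0}. f0 (bb k) - cc k) \<noteq> 0"
    using assms bbp by (auto simp: cc_def prod_zero_iff)
  moreover have "\<forall>f\<in>S-{f0}. (\<Prod>k\<in>S-{f0}. f (bb k) - cc k) = 0"
    using assms by (auto simp: cc_def prod_zero_iff)
  ultimately show ?thesis by blast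
qed

lemma sum_single:
  assumes "finite A" "a \<in> A" "\<forall>z\<in>A-{a}. f z = 0"
  shows "sum f A = f a"
proof -
  have "sum f A = f a + sum f (A - {a})" using assms by (simp add: sum.remove)
  also have "sum f (A - {a}) = 0" using assms by simp
  finally show ?thesis by simp
qed

lemma lin_indep_inj:
  assumes "lin_indep_funs r G"
  shows "inj_on G {1..r}"
proof (rule inj_onI, rule ccontr)
  fix a b assume ab: "a \<in> {1..r}" "b \<in> {1..r}" "G a = G b" "a \<noteq> b"
  define c where "c = (\<lambda>z. if z = a then 1 else if z = b then -1 else (0::real))"
  have "(\<Sum>z=1..r. c z * G z x) = 0" for x
  proof -
    have "(\<Sum>z=1..r. c z * G z x) = (\<Sum>z=1..r. (if z = a then G a x else 0) - (if z = b then G b x else 0))"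
      by (rule sum.cong) (use ab in \<open>auto simp: c_def\<close>)
    also have "\<dots> = 0" using ab by (simp add: sum_subtractf)
    finally show ?thesis .
  qed
  then have "c a = 0" using assms ab unfolding lin_indep_funs_def by blast
  then show False by (simp add: c_def)
qed

lemma sum_prod_nested:
  "(\<Sum>q\<in>A\<times>B. f (fst q) (snd q)) = (\<Sum>x\<in>A. \<Sum>y\<in>B. f x y)"
  by (simp add: sum.cartesian_product split_def)

lemma B2_star:
  "B2 r p F x m A 0 B = (\<Sum>z\<in>{1..r}. p z * ((\<Prod>j<m. marg_cdf r p F z (A j)) * marg_cdf r p F z x))"
proof -
  have "B2 r p F x m A 0 B = (\<Sum>z0\<in>{1..r}. \<Sum>z1\<in>{1..r}. (p z0 * (\<Prod>j<m. marg_cdf r p F z0 (A j))) * (F z0 z1 x * p z1))"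
    unfolding B2_def by (simp add: sum.cartesian_product split_def mult_ac)
  also have "\<dots> = (\<Sum>z\<in>{1..r}. p z * ((\<Prod>j<m. marg_cdf r p F z (A j)) * marg_cdf r p F z x))"
    by (rule sum.cong[OF refl], subst sum_distrib_left[symmetric], simp add: marg_cdf_def mult_ac)
  finally show ?thesis .
qed

lemma star_eq:
  assumes w1: "wsbm r p F" and w2: "wsbm r' p' F'"
    and eq: "\<forall>n x. edge_joint_cdf r p F n x = edge_joint_cdf r' p' F' n x"
  shows "\<forall>(m::nat) b. (\<Sum>z\<in>{1..r}. p z * (\<Prod>j<m. marg_cdf r p F z (b j)))
        = (\<Sum>z\<in>{1..r'}. p' z * (\<Prod>j<m. marg_cdf r' p' F' z (b j)))"
proof (intro allI)
  fix m :: nat and b :: "nat \<Rightarrow> real"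
  show "(\<Sum>z\<in>{1..r}. p z * (\<Prod>j<m. marg_cdf r p F z (b j)))
        = (\<Sum>z\<in>{1..r'}. p' z * (\<Prod>j<m. marg_cdf r' p' F' z (b j)))"
  proof (cases m)
    case 0
    then show ?thesis using w1 w2 by (simp add: wsbm_def)
  next
    case (Suc k)
    have "B2 r p F (b k) k b 0 b = B2 r' p' F' (b k) k b 0 b" by (rule B2_eq[OF w1 w2 eq])
    then show ?thesis unfolding B2_star Suc by (simp add: prod.lessThan_Suc)
  qed
qed

lemma match:
  fixes G G' :: "nat \<Rightarrow> real \<Rightarrow> real" and S :: "(real \<Rightarrow> real) set"
  assumes S: "finite S" "G ` {1..r} \<subseteq> S" "G' ` {1..r'} \<subseteq> S"
    and inj: "inj_on G {1..r}" "inj_on G' {1..r'}"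
    and pos: "\<forall>z\<in>{1..r}. p z > 0"
    and poly: "\<forall>(K::(real\<Rightarrow>real) set) bb cc. finite K \<longrightarrow>
       (\<Sum>z\<in>{1..r}. p z * (\<Prod>k\<in>K. G z (bb k) - cc k)) = (\<Sum>w\<in>{1..r'}. p' w * (\<Prod>k\<in>K. G' w (bb k) - cc k))"
    and z: "z \<in> {1..r}"
  shows "\<exists>w\<in>{1..r'}. G' w = G z \<and> p' w = p z"
proof -
  obtain bb cc where phi: "(\<Prod>k\<in>S-{G z}. G z (bb k) - cc k) \<noteq> 0"
     "\<forall>f\<in>S-{G z}. (\<Prod>k\<in>S-{G z}. f (bb k) - cc k) = 0"
    using phi_exists[OF S(1), of "G z"] by blast
  let ?P = "\<lambda>f. (\<Prod>k\<in>S-{G z}. f (bb k) - cc k)"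
  have fin: "finite (S - {G z})" using S(1) by simp
  have "(\<Sum>z'\<in>{1..r}. p z' * ?P (G z')) = p z * ?P (G z)"
  proof (rule sum_single)
    show "\<forall>z'\<in>{1..r}-{z}. p z' * ?P (G z') = 0"
    proof
      fix z' assume "z' \<in> {1..r}-{z}"
      then have z'1: "z' \<in> {1..r}" "z' \<noteq> z" by auto
      have "G z' \<noteq> G z" using inj_onD[OF inj(1), of z' z] z z'1 by blast
      moreover have "G z' \<in> S" using S(2) z'1 by blast
      ultimately have "G z' \<in> S - {G z}" by blast
      then show "p z' * ?P (G z') = 0" using phi(2) by simp
    qed
  qed (use z in auto)
  moreover have "(\<Sum>z'\<in>{1..r}. p z' * ?P (G z')) = (\<Sum>w\<in>{1..r'}. p' w * ?P (G' w))"
    by (rule poly[rule_format, OF fin])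
  ultimately have eqs: "(\<Sum>w\<in>{1..r'}. p' w * ?P (G' w)) = p z * ?P (G z)" by simp
  have "p z > 0" using pos z by blast
  then have nz: "p z * ?P (G z) \<noteq> 0" using phi(1) by simp
  show ?thesis
  proof (cases "\<exists>w\<in>{1..r'}. G' w = G z")
    case False
    then have "\<forall>w\<in>{1..r'}. G' w \<in> S - {G z}" using S(3) by blast
    then have "(\<Sum>w\<in>{1..r'}. p' w * ?P (G' w)) = 0" using phi(2) by simp
    then show ?thesis using eqs nz by simp
  next
    case True
    then obtain w where w: "w \<in> {1..r'}" "G' w = G z" by blast
    have "(\<Sum>w'\<in>{1..r'}. p' w' * ?P (G' w')) = p' w * ?P (G' w)"
    proof (rule sum_single)
      show "\<forall>w'\<in>{1..r'}-{w}. p' w' * ?P (G' w') = 0"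
      proof
        fix w' assume "w' \<in> {1..r'}-{w}"
        then have w'1: "w' \<in> {1..r'}" "w' \<noteq> w" by auto
        have "G' w' \<noteq> G' w" using inj_onD[OF inj(2), of w' w] w w'1 by blast
        moreover have "G' w' \<in> S" using S(3) w'1 by blast
        ultimately have "G' w' \<in> S - {G z}" using w by simp
        then show "p' w' * ?P (G' w') = 0" using phi(2) by simp
      qed
    qed (use w in auto)
    then have "p' w * ?P (G z) = p z * ?P (G z)" using eqs w by simp
    then have "p' w = p z" using phi(1) by simp
    then show ?thesis using w by blast
  qed
qed


lemma two_block:
  fixes bbA ccA :: "'k \<Rightarrow> real" and bbB ccB :: "'l \<Rightarrow> real"
  assumes w1: "wsbm r p F" and w2: "wsbm r' p' F'"
    and eq: "\<forall>n x. edge_joint_cdf r p F n x = edge_joint_cdf r' p' F' n x"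
    and KA: "finite KA" and KB: "finite KB"
  shows "(\<Sum>q\<in>{1..r}\<times>{1..r}. p (fst q) * p (snd q) * F (fst q) (snd q) x
            * ((\<Prod>k\<in>KA. marg_cdf r p F (fst q) (bbA k) - ccA k) * (\<Prod>k\<in>KB. marg_cdf r p F (snd q) (bbB k) - ccB k)))
       = (\<Sum>q\<in>{1..r'}\<times>{1..r'}. p' (fst q) * p' (snd q) * F' (fst q) (snd q) x
            * ((\<Prod>k\<in>KA. marg_cdf r' p' F' (fst q) (bbA k) - ccA k) * (\<Prod>k\<in>KB. marg_cdf r' p' F' (snd q) (bbB k) - ccB k)))"
proof -
  let ?G = "marg_cdf r p F" and ?G' = "marg_cdf r' p' F'"
  have step1: "(\<Sum>q\<in>{1..r}\<times>{1..r}. (p (fst q) * p (snd q) * F (fst q) (snd q) x * (\<Prod>l<m2. ?G (snd q) (B l)))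
            * (\<Prod>k\<in>KA. ?G (fst q) (bbA k) - ccA k))
       = (\<Sum>q\<in>{1..r'}\<times>{1..r'}. (p' (fst q) * p' (snd q) * F' (fst q) (snd q) x * (\<Prod>l<m2. ?G' (snd q) (B l)))
            * (\<Prod>k\<in>KA. ?G' (fst q) (bbA k) - ccA k))" for m2 :: nat and B :: "nat \<Rightarrow> real"
  proof (rule poly_ext[OF _ KA])
    show "\<forall>(m::nat) A. (\<Sum>q\<in>{1..r}\<times>{1..r}. (p (fst q) * p (snd q) * F (fst q) (snd q) x * (\<Prod>l<m2. ?G (snd q) (B l)))
            * (\<Prod>j<m. ?G (fst q) (A j)))
       = (\<Sum>q\<in>{1..r'}\<times>{1..r'}. (p' (fst q) * p' (snd q) * F' (fst q) (snd q) x * (\<Prod>l<m2. ?G' (snd q) (B l)))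
            * (\<Prod>j<m. ?G' (fst q) (A j)))"
    proof (intro allI)
      fix m :: nat and A :: "nat \<Rightarrow> real"
      have "B2 r p F x m A m2 B = B2 r' p' F' x m A m2 B" by (rule B2_eq[OF w1 w2 eq])
      then show "(\<Sum>q\<in>{1..r}\<times>{1..r}. (p (fst q) * p (snd q) * F (fst q) (snd q) x * (\<Prod>l<m2. ?G (snd q) (B l)))
            * (\<Prod>j<m. ?G (fst q) (A j)))
       = (\<Sum>q\<in>{1..r'}\<times>{1..r'}. (p' (fst q) * p' (snd q) * F' (fst q) (snd q) x * (\<Prod>l<m2. ?G' (snd q) (B l)))
            * (\<Prod>j<m. ?G' (fst q) (A j)))"
        unfolding B2_def by (simp add: mult_ac)
    qed
  qed
  have "(\<Sum>q\<in>{1..r}\<times>{1..r}. (p (fst q) * p (snd q) * F (fst q) (snd q) x * (\<Prod>k\<in>KA. ?G (fst q) (bbA k) - ccA k))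
            * (\<Prod>k\<in>KB. ?G (snd q) (bbB k) - ccB k))
       = (\<Sum>q\<in>{1..r'}\<times>{1..r'}. (p' (fst q) * p' (snd q) * F' (fst q) (snd q) x * (\<Prod>k\<in>KA. ?G' (fst q) (bbA k) - ccA k))
            * (\<Prod>k\<in>KB. ?G' (snd q) (bbB k) - ccB k))"
  proof (rule poly_ext[OF _ KB])
    show "\<forall>(m::nat) B. (\<Sum>q\<in>{1..r}\<times>{1..r}. (p (fst q) * p (snd q) * F (fst q) (snd q) x * (\<Prod>k\<in>KA. ?G (fst q) (bbA k) - ccA k))
            * (\<Prod>j<m. ?G (snd q) (B j)))
       = (\<Sum>q\<in>{1..r'}\<times>{1..r'}. (p' (fst q) * p' (snd q) * F' (fst q) (snd q) x * (\<Prod>k\<in>KA. ?G' (fst q) (bbA k) - ccA k))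
            * (\<Prod>j<m. ?G' (snd q) (B j)))"
      using step1 by (simp add: mult_ac)
  qed
  then show ?thesis by (simp add: mult_ac)
qed



lemma collapse2:
  fixes c :: "'a \<times> 'b \<Rightarrow> real"
  assumes "finite A" "finite B" "a \<in> A" "b \<in> B"
    "\<forall>z\<in>A. z \<noteq> a \<longrightarrow> \<phi> z = 0" "\<forall>z\<in>B. z \<noteq> b \<longrightarrow> \<psi> z = 0"
  shows "(\<Sum>q\<in>A\<times>B. c q * (\<phi> (fst q) * \<psi> (snd q))) = c (a,b) * (\<phi> a * \<psi> b)"
proof -
  have "(\<Sum>q\<in>A\<times>B. c q * (\<phi> (fst q) * \<psi> (snd q))) = (\<lambda>q. c q * (\<phi> (fst q) * \<psi> (snd q))) (a,b)"
  proof (rule sum_single)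
    show "\<forall>z\<in>A \<times> B - {(a, b)}. c z * (\<phi> (fst z) * \<psi> (snd z)) = 0"
      using assms(5,6) by force
  qed (use assms in auto)
  then show ?thesis by simp
qed

theorem proposition1:
  fixes r r' :: nat and p p' :: "nat \<Rightarrow> real" and F F' :: "nat \<Rightarrow> nat \<Rightarrow> real \<Rightarrow> real"
  assumes "wsbm r p F" and "wsbm r' p' F'"
    and "lin_indep_funs r (marg_cdf r p F)"
    and "lin_indep_funs r' (marg_cdf r' p' F')"
    and "\<forall>n x. edge_joint_cdf r p F n x = edge_joint_cdf r' p' F' n x"
  shows "r = r' \<and> (\<exists>\<sigma>. bij_betw \<sigma> {1..r} {1..r}
            \<and> (\<forall>z\<in>{1..r}. p' (\<sigma> z) = p z)
            \<and> (\<forall>z1\<in>{1..r}. \<forall>z2\<in>{1..r}. F' (\<sigma> z1) (\<sigma> z2) = F z1 z2))"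
proof -
  note w1 = assms(1) and w2 = assms(2) and eq = assms(5)
  have eq': "\<forall>n x. edge_joint_cdf r' p' F' n x = edge_joint_cdf r p F n x" using eq by simp
  define G where "G = marg_cdf r p F"
  define G' where "G' = marg_cdf r' p' F'"
  have injG: "inj_on G {1..r}" unfolding G_def by (rule lin_indep_inj[OF assms(3)])
  have injG': "inj_on G' {1..r'}" unfolding G'_def by (rule lin_indep_inj[OF assms(4)])
  have pos: "\<forall>z\<in>{1..r}. p z > 0" using w1 unfolding wsbm_def by blast
  have pos': "\<forall>z\<in>{1..r'}. p' z > 0" using w2 unfolding wsbm_def by blast
  note star = star_eq[OF w1 w2 eq, folded G_def G'_def]
  note star' = star_eq[OF w2 w1 eq', folded G_def G'_def]
  have poly: "\<forall>(K::(real\<Rightarrow>real) set) bb cc. finite K \<longrightarrow>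
       (\<Sum>z\<in>{1..r}. p z * (\<Prod>k\<in>K. G z (bb k) - cc k)) = (\<Sum>w\<in>{1..r'}. p' w * (\<Prod>k\<in>K. G' w (bb k) - cc k))"
    by (intro allI impI, rule poly_ext[OF star])
  have poly': "\<forall>(K::(real\<Rightarrow>real) set) bb cc. finite K \<longrightarrow>
       (\<Sum>z\<in>{1..r'}. p' z * (\<Prod>k\<in>K. G' z (bb k) - cc k)) = (\<Sum>w\<in>{1..r}. p w * (\<Prod>k\<in>K. G w (bb k) - cc k))"
    by (intro allI impI, rule poly_ext[OF star'])
  define S where "S = G ` {1..r} \<union> G' ` {1..r'}"
  have finS: "finite S" unfolding S_def by simp
  have S1: "G ` {1..r} \<subseteq> S" and S2: "G' ` {1..r'} \<subseteq> S" unfolding S_def by auto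
  have m1: "\<exists>w\<in>{1..r'}. G' w = G z \<and> p' w = p z" if "z \<in> {1..r}" for z
    by (rule match[OF finS S1 S2 injG injG' pos poly that])
  have m2: "\<exists>w\<in>{1..r}. G w = G' z \<and> p w = p' z" if "z \<in> {1..r'}" for z
    by (rule match[OF finS S2 S1 injG' injG pos' poly' that])
  define \<sigma> where "\<sigma> = (\<lambda>z. SOME w. w \<in> {1..r'} \<and> G' w = G z \<and> p' w = p z)"
  define \<tau> where "\<tau> = (\<lambda>z. SOME w. w \<in> {1..r} \<and> G w = G' z \<and> p w = p' z)"
  have sig: "\<sigma> z \<in> {1..r'} \<and> G' (\<sigma> z) = G z \<and> p' (\<sigma> z) = p z" if "z \<in> {1..r}" for z
    unfolding \<sigma>_def using someI_ex[OF m1[OF that, unfolded Bex_def]] by blast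
  have tau: "\<tau> z \<in> {1..r} \<and> G (\<tau> z) = G' z \<and> p (\<tau> z) = p' z" if "z \<in> {1..r'}" for z
    unfolding \<tau>_def using someI_ex[OF m2[OF that, unfolded Bex_def]] by blast
  have injs: "inj_on \<sigma> {1..r}"
  proof (rule inj_onI)
    fix a b assume ab: "a \<in> {1..r}" "b \<in> {1..r}" "\<sigma> a = \<sigma> b"
    then have "G a = G b" using sig[OF ab(1)] sig[OF ab(2)] by simp
    then show "a = b" using inj_onD[OF injG] ab by blast
  qed
  have injt: "inj_on \<tau> {1..r'}"
  proof (rule inj_onI)
    fix a b assume ab: "a \<in> {1..r'}" "b \<in> {1..r'}" "\<tau> a = \<tau> b"
    then have "G' a = G' b" using tau[OF ab(1)] tau[OF ab(2)] by simp
    then show "a = b" using inj_onD[OF injG'] ab by blast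
  qed
  have "card {1..r} \<le> card {1..r'}"
    by (rule card_inj_on_le[OF injs]) (use sig in auto)
  moreover have "card {1..r'} \<le> card {1..r}"
    by (rule card_inj_on_le[OF injt]) (use tau in auto)
  ultimately have rr: "r = r'" by simp
  have img: "\<sigma> ` {1..r} = {1..r}"
  proof (rule card_subset_eq)
    show "\<sigma> ` {1..r} \<subseteq> {1..r}" using sig rr by auto
    show "card (\<sigma> ` {1..r}) = card {1..r}" by (rule card_image[OF injs])
  qed simp
  have bij: "bij_betw \<sigma> {1..r} {1..r}" unfolding bij_betw_def using injs img by blast
  have Feq: "F' (\<sigma> a) (\<sigma> b) x = F a b x" if ab: "a \<in> {1..r}" "b \<in> {1..r}" for a b x
  proof -
    obtain bb1 cc1 where phi1: "(\<Prod>k\<in>S-{G a}. G a (bb1 k) - cc1 k) \<noteq> 0"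
       "\<forall>f\<in>S-{G a}. (\<Prod>k\<in>S-{G a}. f (bb1 k) - cc1 k) = 0"
      using phi_exists[OF finS, of "G a"] by blast
    obtain bb2 cc2 where phi2: "(\<Prod>k\<in>S-{G b}. G b (bb2 k) - cc2 k) \<noteq> 0"
       "\<forall>f\<in>S-{G b}. (\<Prod>k\<in>S-{G b}. f (bb2 k) - cc2 k) = 0"
      using phi_exists[OF finS, of "G b"] by blast
    define \<phi> where "\<phi> = (\<lambda>f. \<Prod>k\<in>S-{G a}. f (bb1 k) - cc1 k)"
    define \<psi> where "\<psi> = (\<lambda>f. \<Prod>k\<in>S-{G b}. f (bb2 k) - cc2 k)"
    have TB: "(\<Sum>q\<in>{1..r}\<times>{1..r}. (p (fst q) * p (snd q) * F (fst q) (snd q) x)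
            * ((\<phi> \<circ> G) (fst q) * (\<psi> \<circ> G) (snd q)))
       = (\<Sum>q\<in>{1..r'}\<times>{1..r'}. (p' (fst q) * p' (snd q) * F' (fst q) (snd q) x)
            * ((\<phi> \<circ> G') (fst q) * (\<psi> \<circ> G') (snd q)))"
      using two_block[where KA="S-{G a}" and KB="S-{G b}" and x=x and bbA=bb1 and ccA=cc1
          and bbB=bb2 and ccB=cc2, OF w1 w2 eq] finS
      unfolding \<phi>_def \<psi>_def G_def G'_def by (simp add: o_def)
    have L: "(\<Sum>q\<in>{1..r}\<times>{1..r}. (p (fst q) * p (snd q) * F (fst q) (snd q) x)
            * ((\<phi> \<circ> G) (fst q) * (\<psi> \<circ> G) (snd q)))
       = (p a * p b * F a b x) * ((\<phi> \<circ> G) a * (\<psi> \<circ> G) b)"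
    proof (rule collapse2[where c="\<lambda>q. p (fst q) * p (snd q) * F (fst q) (snd q) x", simplified])
      show "\<forall>z\<in>{1..r}. z \<noteq> a \<longrightarrow> (\<phi> \<circ> G) z = 0"
      proof (intro ballI impI)
        fix z assume z: "z \<in> {1..r}" "z \<noteq> a"
        have "G z \<noteq> G a" using inj_onD[OF injG, of z a] z ab by blast
        moreover have "G z \<in> S" using S1 z by blast
        ultimately show "(\<phi> \<circ> G) z = 0" using phi1(2) unfolding \<phi>_def by simp
      qed
      show "\<forall>z\<in>{1..r}. z \<noteq> b \<longrightarrow> (\<psi> \<circ> G) z = 0"
      proof (intro ballI impI)
        fix z assume z: "z \<in> {1..r}" "z \<noteq> b"
        have "G z \<noteq> G b" using inj_onD[OF injG, of z b] z ab by blast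
        moreover have "G z \<in> S" using S1 z by blast
        ultimately show "(\<psi> \<circ> G) z = 0" using phi2(2) unfolding \<psi>_def by simp
      qed
    qed (use ab in auto)
    have sa: "\<sigma> a \<in> {1..r'}" "G' (\<sigma> a) = G a" "p' (\<sigma> a) = p a" using sig[OF ab(1)] by auto
    have sb: "\<sigma> b \<in> {1..r'}" "G' (\<sigma> b) = G b" "p' (\<sigma> b) = p b" using sig[OF ab(2)] by auto
    have R: "(\<Sum>q\<in>{1..r'}\<times>{1..r'}. (p' (fst q) * p' (snd q) * F' (fst q) (snd q) x)
            * ((\<phi> \<circ> G') (fst q) * (\<psi> \<circ> G') (snd q)))
       = (p' (\<sigma> a) * p' (\<sigma> b) * F' (\<sigma> a) (\<sigma> b) x) * ((\<phi> \<circ> G') (\<sigma> a) * (\<psi> \<circ> G') (\<sigma> b))"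
    proof (rule collapse2[where c="\<lambda>q. p' (fst q) * p' (snd q) * F' (fst q) (snd q) x", simplified])
      show "\<forall>z\<in>{1..r'}. z \<noteq> \<sigma> a \<longrightarrow> (\<phi> \<circ> G') z = 0"
      proof (intro ballI impI)
        fix z assume z: "z \<in> {1..r'}" "z \<noteq> \<sigma> a"
        have "G' z \<noteq> G a" using inj_onD[OF injG', of z "\<sigma> a"] z sa by metis
        moreover have "G' z \<in> S" using S2 z by blast
        ultimately show "(\<phi> \<circ> G') z = 0" using phi1(2) unfolding \<phi>_def by simp
      qed
      show "\<forall>z\<in>{1..r'}. z \<noteq> \<sigma> b \<longrightarrow> (\<psi> \<circ> G') z = 0"
      proof (intro ballI impI)
        fix z assume z: "z \<in> {1..r'}" "z \<noteq> \<sigma> b"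
        have "G' z \<noteq> G b" using inj_onD[OF injG', of z "\<sigma> b"] z sb by metis
        moreover have "G' z \<in> S" using S2 z by blast
        ultimately show "(\<psi> \<circ> G') z = 0" using phi2(2) unfolding \<psi>_def by simp
      qed
    qed (use sa sb in auto)
    have "(p a * p b * F a b x) * (\<phi> (G a) * \<psi> (G b)) = (p a * p b * F' (\<sigma> a) (\<sigma> b) x) * (\<phi> (G a) * \<psi> (G b))"
      using TB L R sa sb by simp
    moreover have "\<phi> (G a) \<noteq> 0" "\<psi> (G b) \<noteq> 0" using phi1(1) phi2(1) unfolding \<phi>_def \<psi>_def by auto
    moreover have "p a > 0" "p b > 0" using pos ab by auto
    ultimately show ?thesis by simp
  qed
  show ?thesis
    using rr bij sig Feq by (intro conjI exI[of _ \<sigma>]) (auto simp: fun_eq_iff)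
qed

end
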